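(* Suppose $T\in\mathcal B(\mathcal H)$ is quasitriangular and $\{P_n\}$ is a filtration with $\|(I-P_n)TP_n\|\to0$. Let $T_n=P_nT|_{P_n\mathcal H}$. Then $j_{T_n}\to j_T$ uniformly on $\mathbb C$.
   Context: $\mathcal H$ is a complex separable Hilbert space. For an operator $A$ on a Hilbert space $\mathcal K$, $j_A(z)=\inf\{\|(A-z)h\|:h\in\mathcal K,\|h\|=1\}$. A filtration is a sequence $\{P_n\}$ of finite-rank orthogonal projections with $\operatorname{Ran}P_n\subseteq\operatorname{Ran}P_{n+1}$ and $\bigcup_n\operatorname{Ran}P_n$ dense. $T$ is quasitriangular if there is a filtration $\{P_n\}$ with $\|(I-P_n)TP_n\|\to0$. *)

theory Defs
  imports "HOL-Analysis.Analysis"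
begin

text \<open>A complex Hilbert space is modelled as a real Hilbert space (real_inner, complete)
  together with a complex structure J (multiplication by the imaginary unit),
  real inner product = real part of the complex inner product.\<close>

definition complex_structure :: "('a::real_inner \<Rightarrow> 'a) \<Rightarrow> bool" where
  "complex_structure J \<longleftrightarrow> linear J \<and> (\<forall>x. J (J x) = - x) \<and>
     (\<forall>x y. inner (J x) (J y) = inner x y)"

definition cscale :: "('a::real_vector \<Rightarrow> 'a) \<Rightarrow> complex \<Rightarrow> 'a \<Rightarrow> 'a" where
  "cscale J z x = Re z *\<^sub>R x + Im z *\<^sub>R J x"

text \<open>bounded complex-linear operators\<close>
definition bounded_op :: "('a::real_normed_vector \<Rightarrow> 'a) \<Rightarrow> ('a \<Rightarrow> 'a) \<Rightarrow> bool" where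
  "bounded_op J T \<longleftrightarrow> bounded_linear T \<and> (\<forall>x. T (J x) = J (T x))"

definition fin_rank_orth_proj :: "('a::real_inner \<Rightarrow> 'a) \<Rightarrow> ('a \<Rightarrow> 'a) \<Rightarrow> bool" where
  "fin_rank_orth_proj J P \<longleftrightarrow> bounded_op J P \<and> (\<forall>x. P (P x) = P x) \<and>
     (\<forall>x y. inner (P x) y = inner x (P y)) \<and> (\<exists>B. finite B \<and> range P \<subseteq> span B)"

definition filtration :: "('a::real_inner \<Rightarrow> 'a) \<Rightarrow> (nat \<Rightarrow> 'a \<Rightarrow> 'a) \<Rightarrow> bool" where
  "filtration J P \<longleftrightarrow> (\<forall>n. fin_rank_orth_proj J (P n)) \<and>
     (\<forall>n. range (P n) \<subseteq> range (P (Suc n))) \<and> closure (\<Union>n. range (P n)) = UNIV"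

definition quasitriangular :: "('a::real_inner \<Rightarrow> 'a) \<Rightarrow> ('a \<Rightarrow> 'a) \<Rightarrow> bool" where
  "quasitriangular J T \<longleftrightarrow> (\<exists>P. filtration J P \<and>
     (\<lambda>n. onorm (\<lambda>x. T (P n x) - P n (T (P n x)))) \<longlonglongrightarrow> 0)"

text \<open>j_A(z) for an operator A acting on the (closed) subspace K\<close>
definition jfun :: "('a::real_normed_vector \<Rightarrow> 'a) \<Rightarrow> 'a set \<Rightarrow> ('a \<Rightarrow> 'a) \<Rightarrow> complex \<Rightarrow> real" where
  "jfun J K A z = Inf {norm (A h - cscale J z h) | h. h \<in> K \<and> norm h = 1}"

end

theory Submission
  imports Defs
begin


lemma cs_props:
  assumes "complex_structure J"
  shows "linear J" "J (J x) = - x" "inner (J a) (J b) = inner a b"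
  using assms unfolding complex_structure_def by auto

lemma cs_inner0:
  assumes "complex_structure J"
  shows "inner (J x) x = 0"
proof -
  have "inner (J (J x)) (J x) = inner (J x) x" using cs_props(3)[OF assms] .
  then have "inner (- x) (J x) = inner (J x) x" using cs_props(2)[OF assms] by simp
  then show ?thesis by (simp add: inner_commute)
qed

lemma cs_norm:
  assumes "complex_structure J"
  shows "norm (J x) = norm x"
  using cs_props(3)[OF assms, of x x] by (simp add: norm_eq_sqrt_inner)

lemma cs_bl:
  assumes "complex_structure J"
  shows "bounded_linear J"
proof -
  interpret linear J using cs_props(1)[OF assms] .
  show ?thesis by unfold_locales (rule exI[of _ 1], simp add: cs_norm[OF assms])
qed

lemma cscale_norm_sq:
  assumes "complex_structure J"
  shows "(norm (cscale J z h))^2 = ((Re z)^2 + (Im z)^2) * (norm h)^2"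
proof -
  have "(norm (cscale J z h))^2 = inner (Re z *\<^sub>R h + Im z *\<^sub>R J h) (Re z *\<^sub>R h + Im z *\<^sub>R J h)"
    by (simp add: cscale_def power2_norm_eq_inner)
  also have "\<dots> = (Re z)^2 * inner h h + (Im z)^2 * inner (J h) (J h) + 2 * Re z * Im z * inner (J h) h"
    by (simp add: inner_add_left inner_add_right inner_commute power2_eq_square algebra_simps)
  also have "\<dots> = ((Re z)^2 + (Im z)^2) * (norm h)^2"
    using cs_inner0[OF assms, of h] cs_props(3)[OF assms, of h h]
    by (simp add: power2_norm_eq_inner algebra_simps)
  finally show ?thesis .
qed

lemma cscale_norm:
  assumes "complex_structure J"
  shows "norm (cscale J z h) = cmod z * norm h"
proof -
  have "(norm (cscale J z h))^2 = (cmod z * norm h)^2"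
    using cscale_norm_sq[OF assms] by (simp add: cmod_power2 power_mult_distrib)
  then show ?thesis by (simp add: power2_eq_iff_nonneg)
qed

lemma Nf_sq:
  assumes "complex_structure J" "norm h = 1"
  shows "(norm (T h - cscale J z h))^2 = (norm (T h))^2 - 2*(Re z * inner (T h) h + Im z * inner (T h) (J h)) + (Re z)^2 + (Im z)^2"
proof -
  have "(norm (T h - cscale J z h))^2 = (norm (T h))^2 - 2 * inner (T h) (cscale J z h) + (norm (cscale J z h))^2"
    by (simp add: power2_norm_eq_inner inner_diff_left inner_diff_right inner_commute)
  then show ?thesis using cscale_norm_sq[OF assms(1), of z h] assms(2)
    by (simp add: cscale_def inner_add_right)
qed

lemma Nf_lower:
  assumes "complex_structure J" "norm h = 1" "bounded_linear T"
  shows "norm (T h - cscale J z h) \<ge> cmod z - onorm T"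
proof -
  have "norm (T h) \<le> onorm T" using onorm[OF assms(3), of h] assms(2) by simp
  moreover have "norm (cscale J z h) = cmod z" using cscale_norm[OF assms(1)] assms(2) by simp
  moreover have "norm (cscale J z h) - norm (T h) \<le> norm (T h - cscale J z h)"
    by (metis norm_minus_commute norm_triangle_ineq2)
  ultimately show ?thesis by linarith
qed

lemma proj_props:
  assumes "fin_rank_orth_proj J P"
  shows "bounded_linear P" "P (P x) = P x" "\<And>x. P (J x) = J (P x)" "norm (P x) \<le> norm x"
proof -
  show bl: "bounded_linear P" "P (P x) = P x" "\<And>x. P (J x) = J (P x)"
    using assms unfolding fin_rank_orth_proj_def bounded_op_def by auto
  have "(norm (P x))^2 = inner (P x) (P x)" by (simp add: power2_norm_eq_inner)
  also have "\<dots> = inner x (P (P x))" using assms unfolding fin_rank_orth_proj_def by auto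
  also have "\<dots> = inner x (P x)" using bl(2) by simp
  also have "\<dots> \<le> norm x * norm (P x)" by (rule norm_cauchy_schwarz)
  finally have "norm (P x) * norm (P x) \<le> norm x * norm (P x)" by (simp add: power2_eq_square)
  then show "norm (P x) \<le> norm x"
    by (cases "norm (P x) = 0") (auto simp: mult_le_cancel_right)
qed

lemma filt_tendsto:
  assumes "filtration J P"
  shows "(\<lambda>n. P n x) \<longlonglongrightarrow> x"
proof (rule LIMSEQ_I)
  fix e :: real assume e: "e > 0"
  have "x \<in> closure (\<Union>n. range (P n))" using assms unfolding filtration_def by auto
  then obtain y where y: "y \<in> (\<Union>n. range (P n))" "dist y x < e/2"
    using closure_approachable e by (metis half_gt_zero)
  then obtain m w where ym: "y = P m w" by auto
  have mono: "\<And>n. range (P n) \<subseteq> range (P (Suc n))" using assms unfolding filtration_def by auto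
  have fp: "\<And>n. fin_rank_orth_proj J (P n)" using assms unfolding filtration_def by auto
  show "\<exists>no. \<forall>n\<ge>no. norm (P n x - x) < e"
  proof (intro exI allI impI)
    fix n assume "m \<le> n"
    then have "range (P m) \<subseteq> range (P n)" using lift_Suc_mono_le[of "\<lambda>n. range (P n)", OF mono] by blast
    then obtain w' where "y = P n w'" using ym by auto
    then have Py: "P n y = y" using proj_props(2)[OF fp] by simp
    interpret bounded_linear "P n" using proj_props(1)[OF fp] .
    have "P n x - x = P n (x - y) + (y - x)" using Py by (simp add: diff)
    then have "norm (P n x - x) \<le> norm (P n (x - y)) + norm (y - x)" by (metis norm_triangle_ineq)
    also have "\<dots> \<le> norm (x - y) + norm (y - x)" using proj_props(4)[OF fp] by (metis add_right_mono)
    also have "\<dots> < e" using y(2) by (simp add: dist_norm norm_minus_commute)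
    finally show "norm (P n x - x) < e" .
  qed
qed



lemma finite_net:
  fixes S :: "'b::heine_borel set"
  assumes "bounded S" "e > 0"
  shows "\<exists>k. finite k \<and> k \<subseteq> S \<and> (\<forall>s\<in>S. \<exists>c\<in>k. dist s c < e)"
proof -
  have sc: "seq_compact (closure S)" using assms(1) compact_closure compact_imp_seq_compact by blast
  have e2: "e/2 > 0" using assms(2) by simp
  from seq_compact_imp_totally_bounded[OF sc, rule_format, OF e2]
  obtain k' where k': "finite k'" "k' \<subseteq> closure S" "closure S \<subseteq> (\<Union>x\<in>k'. ball x (e/2))"
    by blast
  define f where "f c = (SOME s. s \<in> S \<and> dist s c < e/2)" for c
  have f: "f c \<in> S \<and> dist (f c) c < e/2" if "c \<in> k'" for c
  proof -
    have "c \<in> closure S" using k'(2) that by blast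
    then have "\<exists>s. s \<in> S \<and> dist s c < e/2" using closure_approachable e2 by blast
    then show ?thesis unfolding f_def by (rule someI_ex)
  qed
  show ?thesis
  proof (intro exI conjI ballI)
    show "finite (f ` k')" using k'(1) by simp
    show "f ` k' \<subseteq> S" using f by auto
  next
    fix s assume "s \<in> S"
    then have "s \<in> (\<Union>x\<in>k'. ball x (e/2))" using k'(3) closure_subset by blast
    then obtain c where c: "c \<in> k'" "dist s c < e/2" by (auto simp: dist_commute)
    have "dist s (f c) < e" by (rule dist_triangle_half_l[OF c(2)]) (use f[OF c(1)] in blast)
    then show "\<exists>c\<in>f ` k'. dist s c < e" using c(1) by blast
  qed
qed

lemma dist3:
  fixes x y :: "real \<times> real \<times> real"
  assumes "dist x y < d"
  shows "\<bar>fst x - fst y\<bar> < d" "\<bar>fst (snd x) - fst (snd y)\<bar> < d" "\<bar>snd (snd x) - snd (snd y)\<bar> < d"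
proof -
  show "\<bar>fst x - fst y\<bar> < d" using dist_fst_le[of x y] assms by (simp add: dist_real_def)
  have s: "dist (snd x) (snd y) < d" using dist_snd_le[of x y] assms by simp
  show "\<bar>fst (snd x) - fst (snd y)\<bar> < d" using dist_fst_le[of "snd x" "snd y"] s by (simp add: dist_real_def)
  show "\<bar>snd (snd x) - snd (snd y)\<bar> < d" using dist_snd_le[of "snd x" "snd y"] s by (simp add: dist_real_def)
qed

lemma sqrt_step:
  fixes a b r M d \<delta> :: real
  assumes "a \<ge> 0" "b \<ge> 0" "r \<ge> 0" "M \<ge> 0" "\<delta> > 0" "d \<ge> 0"
    and "a^2 \<le> b^2 + d * (1 + 4*r)" "b \<ge> r - M"
    and "d \<le> \<delta>/4" "d \<le> \<delta>^2/(8*M+5)"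
  shows "a \<le> b + \<delta>"
proof -
  have "d * (1 + 4*r) \<le> 2*\<delta>*b + \<delta>^2"
  proof (cases "r \<le> 2*M+1")
    case True
    have "d * (1 + 4*r) \<le> d * (8*M+5)" using True assms(6) by (intro mult_left_mono) auto
    also have "\<dots> \<le> \<delta>^2" using assms(10) assms(4) by (simp add: pos_le_divide_eq mult.commute)
    moreover have "0 \<le> 2*\<delta>*b" using assms(2,5) by simp
    ultimately show ?thesis by linarith
  next
    case False
    then have "2*b \<ge> r + 1" using assms(8) by linarith
    from mult_left_mono[OF this, of \<delta>] have "2*\<delta>*b \<ge> \<delta>*(r+1)" using assms(5) by (simp add: algebra_simps)
    moreover have "d * (1 + 4*r) \<le> (\<delta>/4) * (4*(r+1))" using assms(3,6,9) by (intro mult_mono) auto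
    moreover have "(\<delta>/4) * (4*(r+1)) = \<delta>*(r+1)" by simp
    moreover have "0 \<le> \<delta>^2" by simp
    ultimately show ?thesis by linarith
  qed
  then have "a^2 \<le> (b+\<delta>)^2" using assms(7) by (simp add: power2_sum algebra_simps)
  then show ?thesis by (rule power2_le_imp_le) (use assms(2,5) in linarith)
qed

lemma range_scale:
  assumes "linear f"
  shows "c *\<^sub>R f w \<in> range f"
proof -
  interpret linear f by fact
  show ?thesis by (metis scale rangeI)
qed



theorem theorem3p5:
  fixes J :: "'a::{real_inner, complete_space} \<Rightarrow> 'a"
    and T :: "'a \<Rightarrow> 'a"
    and P :: "nat \<Rightarrow> 'a \<Rightarrow> 'a"
  assumes "complex_structure J"
    and "\<exists>D::'a set. countable D \<and> closure D = UNIV"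
    and "bounded_op J T"
    and "quasitriangular J T"
    and "filtration J P"
    and "(\<lambda>n. onorm (\<lambda>x. T (P n x) - P n (T (P n x)))) \<longlonglongrightarrow> 0"
  shows "uniform_limit UNIV (\<lambda>n z. jfun J (range (P n)) (\<lambda>h. P n (T h)) z)
           (jfun J UNIV T) sequentially"
proof (cases "\<forall>x::'a. x = 0")
  case True
  have "jfun J (range (P n)) (\<lambda>h. P n (T h)) z = jfun J UNIV T z" for n z
  proof -
    have z: "\<And>h::'a. norm h \<noteq> 1" using True by (metis norm_zero zero_neq_one)
    have "{norm (P n (T h) - cscale J z h) |h. h \<in> range (P n) \<and> norm h = 1} = {}"
      using z by auto
    moreover have "{norm (T h - cscale J z h) |h. h \<in> UNIV \<and> norm h = 1} = {}"
      using z by auto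
    ultimately show ?thesis unfolding jfun_def by simp
  qed
  then show ?thesis unfolding uniform_limit_sequentially_iff by simp
next
  case False
  then obtain v :: 'a where "v \<noteq> 0" by blast
  define v0 where "v0 = (1 / norm v) *\<^sub>R v"
  have v0: "norm v0 = 1" using \<open>v \<noteq> 0\<close> by (simp add: v0_def)
  have J: "complex_structure J" by fact
  have blT: "bounded_linear T" using assms(3) unfolding bounded_op_def by simp
  define M where "M = onorm T"
  have M0: "M \<ge> 0" unfolding M_def using onorm_pos_le[OF blT] .
  have TM: "norm (T h) \<le> M" if "norm h = 1" for h
    using onorm[OF blT, of h] that by (simp add: M_def)
  have fp: "\<And>n. fin_rank_orth_proj J (P n)" using assms(5) unfolding filtration_def by auto
  have blJ: "bounded_linear J" using cs_bl[OF J] .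
  define tr where "tr h = ((norm (T h))^2, inner (T h) h, inner (T h) (J h))" for h
  define U where "U = {h::'a. norm h = 1}"
  have bU: "bounded (tr ` U)"
  proof (rule bounded_subset)
    show "bounded (cball (0::real) (M^2) \<times> (cball (0::real) M \<times> cball 0 M))"
      by (intro bounded_Times bounded_cball)
    show "tr ` U \<subseteq> cball (0::real) (M^2) \<times> (cball (0::real) M \<times> cball 0 M)"
    proof
      fix s assume "s \<in> tr ` U"
      then obtain h where h: "norm h = 1" "s = tr h" by (auto simp: U_def)
      have a: "(norm (T h))^2 \<le> M^2" using TM[OF h(1)] by (intro power_mono) auto
      have b: "\<bar>inner (T h) h\<bar> \<le> M" using Cauchy_Schwarz_ineq2[of "T h" h] TM[OF h(1)] h(1) by simp
      have c: "\<bar>inner (T h) (J h)\<bar> \<le> M" using Cauchy_Schwarz_ineq2[of "T h" "J h"] TM[OF h(1)] h(1)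
        cs_norm[OF J, of h] by simp
      show "s \<in> cball (0::real) (M^2) \<times> (cball (0::real) M \<times> cball 0 M)"
        using a b c h(2) by (simp add: tr_def)
    qed
  qed
  show ?thesis
    unfolding uniform_limit_sequentially_iff
  proof (intro allI impI)
    fix e :: real assume e: "e > 0"
    define \<delta> where "\<delta> = e/4"
    have \<delta>: "\<delta> > 0" using e by (simp add: \<delta>_def)
    define \<eta> where "\<eta> = min (\<delta>/4) (\<delta>^2/(8*M+5))"
    have \<eta>: "\<eta> > 0" using \<delta> M0 by (simp add: \<eta>_def)
    obtain K where K: "finite K" "K \<subseteq> tr ` U" "\<forall>s\<in>tr ` U. \<exists>c\<in>K. dist s c < \<eta>/2"
      using finite_net[OF bU, of "\<eta>/2"] \<eta> by auto
    obtain H where H: "H \<subseteq> U" "finite H" "K = tr ` H"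
      using finite_subset_image[OF K(1) K(2)] by blast
    have Hcov: "\<exists>k\<in>H. dist (tr h) (tr k) < \<eta>/2" if "norm h = 1" for h
      using K(3) H(3) that by (auto simp: U_def)
    define w where "w n k = (1 / norm (P n k)) *\<^sub>R P n k" for n k
    have evk: "eventually (\<lambda>n. P n k \<noteq> 0 \<and> dist (tr (w n k)) (tr k) < \<eta>/2) sequentially"
      if "k \<in> H" for k
    proof -
      have k1: "norm k = 1" using that H(1) by (auto simp: U_def)
      have Pk: "(\<lambda>n. P n k) \<longlonglongrightarrow> k" using filt_tendsto[OF assms(5)] .
      have nPk: "(\<lambda>n. norm (P n k)) \<longlonglongrightarrow> 1" using tendsto_norm[OF Pk] k1 by simp
      have ev1: "eventually (\<lambda>n. P n k \<noteq> 0) sequentially"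
        using order_tendstoD(1)[OF nPk, of 0] by (auto elim: eventually_mono)
      have "(\<lambda>n. (1 / norm (P n k)) *\<^sub>R P n k) \<longlonglongrightarrow> (1/1) *\<^sub>R k"
        by (intro tendsto_scaleR tendsto_divide tendsto_const nPk Pk) simp
      then have wk: "(\<lambda>n. w n k) \<longlonglongrightarrow> k" by (simp add: w_def)
      have Tw: "(\<lambda>n. T (w n k)) \<longlonglongrightarrow> T k" using bounded_linear.tendsto[OF blT wk] .
      have Jw: "(\<lambda>n. J (w n k)) \<longlonglongrightarrow> J k" using bounded_linear.tendsto[OF blJ wk] .
      have "(\<lambda>n. tr (w n k)) \<longlonglongrightarrow> tr k"
        unfolding tr_def by (intro tendsto_Pair tendsto_power tendsto_norm tendsto_inner Tw Jw wk)
      then have ev2: "eventually (\<lambda>n. dist (tr (w n k)) (tr k) < \<eta>/2) sequentially"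
        using \<eta> by (intro tendstoD) auto
      show ?thesis using ev1 ev2 by (rule eventually_conj)
    qed
    have eveps: "eventually (\<lambda>n. onorm (\<lambda>x. T (P n x) - P n (T (P n x))) < \<delta>) sequentially"
      using order_tendstoD(2)[OF assms(6) \<delta>] .
    have evH: "eventually (\<lambda>n. \<forall>k\<in>H. P n k \<noteq> 0 \<and> dist (tr (w n k)) (tr k) < \<eta>/2) sequentially"
      using evk by (intro eventually_ball_finite[OF H(2)]) simp
    have "eventually (\<lambda>n. onorm (\<lambda>x. T (P n x) - P n (T (P n x))) < \<delta> \<and>
        (\<forall>k\<in>H. P n k \<noteq> 0 \<and> dist (tr (w n k)) (tr k) < \<eta>/2)) sequentially"
      by (rule eventually_conj[OF eveps evH])
    then obtain N where N: "\<And>n. n \<ge> N \<Longrightarrow> onorm (\<lambda>x. T (P n x) - P n (T (P n x))) < \<delta> \<and>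
        (\<forall>k\<in>H. P n k \<noteq> 0 \<and> dist (tr (w n k)) (tr k) < \<eta>/2)"
      unfolding eventually_sequentially by blast
    show "\<exists>N. \<forall>n\<ge>N. \<forall>z\<in>UNIV. dist (jfun J (range (P n)) (\<lambda>h. P n (T h)) z) (jfun J UNIV T z) < e"
    proof (intro exI allI impI ballI)
      fix n z assume n: "N \<le> n"
      note Nn = N[OF n]
      define \<epsilon> where "\<epsilon> = onorm (\<lambda>x. T (P n x) - P n (T (P n x)))"
      have \<epsilon>: "\<epsilon> < \<delta>" using Nn by (simp add: \<epsilon>_def)
      interpret Pn: bounded_linear "P n" using proj_props(1)[OF fp] .
      have Pfix: "P n u = u" if "u \<in> range (P n)" for u
        using that proj_props(2)[OF fp] by auto
      have Pc: "P n (cscale J z u) = cscale J z u" if "u \<in> range (P n)" for u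
        using Pfix[OF that] proj_props(3)[OF fp, of n u]
        by (simp add: cscale_def Pn.add Pn.scale)
      have wprop: "norm (w n k) = 1 \<and> w n k \<in> range (P n)" if "k \<in> H" for k
        using Nn that range_scale[OF Pn.linear, of "1 / norm (P n k)" k]
        by (simp add: w_def)
      define Sn where "Sn = {norm (P n (T h) - cscale J z h) |h. h \<in> range (P n) \<and> norm h = 1}"
      define S where "S = {norm (T h - cscale J z h) |h. h \<in> UNIV \<and> norm h = 1}"
      have jn: "jfun J (range (P n)) (\<lambda>h. P n (T h)) z = Inf Sn" by (simp add: jfun_def Sn_def)
      have j: "jfun J UNIV T z = Inf S" by (simp add: jfun_def S_def)
      obtain k0 where k0: "k0 \<in> H" using Hcov[OF v0] by blast
      have Sn_ne: "Sn \<noteq> {}" using wprop[OF k0] unfolding Sn_def by blast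
      have S_ne: "S \<noteq> {}" using v0 unfolding S_def by blast
      have Sn_bdd: "bdd_below Sn" unfolding Sn_def by (rule bdd_belowI[of _ 0]) auto
      have S_bdd: "bdd_below S" unfolding S_def by (rule bdd_belowI[of _ 0]) auto
      have blE: "bounded_linear (\<lambda>x. T (P n x) - P n (T (P n x)))"
        by (intro bounded_linear_sub bounded_linear_compose[OF blT] bounded_linear_compose[OF Pn.bounded_linear_axioms]
            Pn.bounded_linear_axioms)
      have low: "Inf S - \<epsilon> \<le> Inf Sn"
      proof (rule cInf_greatest[OF Sn_ne])
        fix x assume "x \<in> Sn"
        then obtain h where h: "h \<in> range (P n)" "norm h = 1" "x = norm (P n (T h) - cscale J z h)"
          unfolding Sn_def by blast
        have "Inf S \<le> norm (T h - cscale J z h)"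
          using h(2) S_bdd unfolding S_def by (intro cInf_lower) auto
        also have "T h - cscale J z h = (P n (T h) - cscale J z h) + (T (P n h) - P n (T (P n h)))"
          using Pfix[OF h(1)] by simp
        also have "norm \<dots> \<le> x + norm (T (P n h) - P n (T (P n h)))"
          using h(3) norm_triangle_ineq by blast
        also have "norm (T (P n h) - P n (T (P n h))) \<le> \<epsilon>"
          using onorm[OF blE, of h] h(2) by (simp add: \<epsilon>_def)
        finally show "Inf S - \<epsilon> \<le> x" by simp
      qed
      have up: "Inf Sn \<le> Inf S + 2*\<delta>"
      proof -
        have "Inf S < Inf S + \<delta>" using \<delta> by simp
        from cInf_lessD[OF S_ne this] obtain h where h: "norm h = 1" "norm (T h - cscale J z h) < Inf S + \<delta>"
          unfolding S_def by blast
        obtain k where k: "k \<in> H" "dist (tr h) (tr k) < \<eta>/2" using Hcov[OF h(1)] by blast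
        define u where "u = w n k"
        have u: "norm u = 1" "u \<in> range (P n)" using wprop[OF k(1)] by (auto simp: u_def)
        have d1: "dist (tr u) (tr k) < \<eta>/2" using Nn k(1) unfolding u_def by blast
        have "dist (tr u) (tr h) < \<eta>"
          by (rule dist_triangle_half_l[OF d1 k(2)])
        note d3 = dist3[OF this]
        define r where "r = cmod z"
        have r0: "r \<ge> 0" by (simp add: r_def)
        have re: "\<bar>Re z\<bar> \<le> r" "\<bar>Im z\<bar> \<le> r" by (simp_all add: r_def abs_Re_le_cmod abs_Im_le_cmod)
        define B1 where "B1 = inner (T u) u - inner (T h) h"
        define B2 where "B2 = inner (T u) (J u) - inner (T h) (J h)"
        have b1: "\<bar>B1\<bar> < \<eta>" "\<bar>B2\<bar> < \<eta>" using d3 by (simp_all add: B1_def B2_def tr_def)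
        have a0: "\<bar>(norm (T u))^2 - (norm (T h))^2\<bar> < \<eta>" using d3 by (simp add: tr_def)
        have m1: "\<bar>Re z * B1\<bar> \<le> r * \<eta>" unfolding abs_mult using re b1 r0
          by (intro mult_mono) auto
        have m2: "\<bar>Im z * B2\<bar> \<le> r * \<eta>" unfolding abs_mult using re b1 r0
          by (intro mult_mono) auto
        have sq: "(norm (T u - cscale J z u))^2 \<le> (norm (T h - cscale J z h))^2 + \<eta> * (1 + 4*r)"
        proof -
          have "(norm (T u - cscale J z u))^2 - (norm (T h - cscale J z h))^2
              = ((norm (T u))^2 - (norm (T h))^2) - 2 * (Re z * B1) - 2 * (Im z * B2)"
            using Nf_sq[OF J u(1), of T z] Nf_sq[OF J h(1), of T z]
            by (simp add: B1_def B2_def algebra_simps)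
          moreover have "\<eta> * (1 + 4*r) = \<eta> + 4*(r*\<eta>)" by (simp add: algebra_simps)
          ultimately show ?thesis using a0 m1 m2 by linarith
        qed
        have step: "norm (T u - cscale J z u) \<le> norm (T h - cscale J z h) + \<delta>"
        proof (rule sqrt_step[OF _ _ r0 M0 \<delta> _ sq])
          show "norm (T h - cscale J z h) \<ge> r - M"
            using Nf_lower[OF J h(1) blT, of z] by (simp add: r_def M_def)
          show "\<eta> \<le> \<delta>/4" unfolding \<eta>_def by (rule min.cobounded1)
          show "\<eta> \<le> \<delta>^2/(8*M+5)" unfolding \<eta>_def by (rule min.cobounded2)
        qed (use \<eta> in auto)
        have "Inf Sn \<le> norm (P n (T u) - cscale J z u)"
          using u Sn_bdd unfolding Sn_def by (intro cInf_lower) auto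
        also have "P n (T u) - cscale J z u = P n (T u - cscale J z u)"
          using Pc[OF u(2)] by (simp add: Pn.diff)
        also have "norm \<dots> \<le> norm (T u - cscale J z u)" using proj_props(4)[OF fp] .
        finally show ?thesis using step h(2) by linarith
      qed
      show "dist (jfun J (range (P n)) (\<lambda>h. P n (T h)) z) (jfun J UNIV T z) < e"
        unfolding jn j dist_real_def using low up \<epsilon> by (simp add: \<delta>_def abs_diff_less_iff)
    qed
  qed
qed

end
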